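(* Let $n\ge 2$ and consider Tower of Hanoi on three pegs with $n$ disks, starting from the initial position (all $n$ disks on Peg 1). For every position $P$ of the $n$ disks on the three pegs, there is a finite sequence of legal moves of odd length, in which no two consecutive moves move the same disk, that transforms the initial position into $P$. Equivalently, in the two-player setting described in the context (players alternating, a player may not move the disk just moved by the opponent), the first player can force play to reach any position $P$ after an odd number of moves.
   Context: Tower of Hanoi on three pegs (labeled 1, 2, 3) with $n$ disks of pairwise distinct sizes: a position is an assignment of each disk to a peg, the disks on each peg being stacked with sizes decreasing from bottom to top. A legal move transfers the top disk of one peg to a different peg that is empty or whose top disk is larger. Here, sequences of legal moves are considered without any restriction on intermediate positions (in particular, intermediate positions may have all disks on one peg), except that no disk may be moved in two consecutive moves. *)

theory Defs
  imports Main
begin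

text \<open>A position of n disks is a list of length n; entry i is the peg (1, 2 or 3)
  of disk i. Disks are ordered by size: disk i is smaller than disk j iff i < j.\<close>

definition hanoi_pos :: "nat \<Rightarrow> nat list \<Rightarrow> bool" where
  "hanoi_pos n s \<longleftrightarrow> length s = n \<and> set s \<subseteq> {1, 2, 3}"

definition initial_pos :: "nat \<Rightarrow> nat list" where
  "initial_pos n = replicate n 1"

definition legal_move :: "nat list \<Rightarrow> nat \<Rightarrow> nat \<Rightarrow> bool" where
  "legal_move s d q \<longleftrightarrow> d < length s \<and> q \<in> {1, 2, 3} \<and> q \<noteq> s ! d
     \<and> (\<forall>d'<d. s ! d' \<noteq> s ! d) \<and> (\<forall>d'<d. s ! d' \<noteq> q)"

definition do_move :: "nat list \<Rightarrow> nat \<times> nat \<Rightarrow> nat list" where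
  "do_move s m = s[fst m := snd m]"

fun legal_seq :: "nat list \<Rightarrow> (nat \<times> nat) list \<Rightarrow> bool" where
  "legal_seq s [] = True"
| "legal_seq s (m # ms) = (legal_move s (fst m) (snd m) \<and> legal_seq (do_move s m) ms)"

definition apply_seq :: "nat list \<Rightarrow> (nat \<times> nat) list \<Rightarrow> nat list" where
  "apply_seq s ms = foldl do_move s ms"

definition no_consecutive_same_disk :: "(nat \<times> nat) list \<Rightarrow> bool" where
  "no_consecutive_same_disk ms \<longleftrightarrow>
     (\<forall>i. Suc i < length ms \<longrightarrow> fst (ms ! i) \<noteq> fst (ms ! Suc i))"

end

theory Submission
  imports Defs
begin

fun nc :: "(nat \<times> nat) list \<Rightarrow> bool" where
  "nc [] = True"
| "nc [m] = True"
| "nc (m # m' # ms) = (fst m \<noteq> fst m' \<and> nc (m' # ms))"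

lemma ncs_cons2: "no_consecutive_same_disk (m # m' # ms) \<longleftrightarrow> fst m \<noteq> fst m' \<and> no_consecutive_same_disk (m' # ms)"
  unfolding no_consecutive_same_disk_def
proof
  assume H: "\<forall>i. Suc i < length (m # m' # ms) \<longrightarrow> fst ((m # m' # ms) ! i) \<noteq> fst ((m # m' # ms) ! Suc i)"
  show "fst m \<noteq> fst m' \<and> (\<forall>i. Suc i < length (m' # ms) \<longrightarrow> fst ((m' # ms) ! i) \<noteq> fst ((m' # ms) ! Suc i))"
  proof
    show "fst m \<noteq> fst m'" using H[rule_format, of 0] by simp
    show "\<forall>i. Suc i < length (m' # ms) \<longrightarrow> fst ((m' # ms) ! i) \<noteq> fst ((m' # ms) ! Suc i)"
      using H by (metis Suc_less_eq length_Cons nth_Cons_Suc)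
  qed
next
  assume H: "fst m \<noteq> fst m' \<and> (\<forall>i. Suc i < length (m' # ms) \<longrightarrow> fst ((m' # ms) ! i) \<noteq> fst ((m' # ms) ! Suc i))"
  show "\<forall>i. Suc i < length (m # m' # ms) \<longrightarrow> fst ((m # m' # ms) ! i) \<noteq> fst ((m # m' # ms) ! Suc i)"
  proof (intro allI impI)
    fix i assume "Suc i < length (m # m' # ms)"
    then show "fst ((m # m' # ms) ! i) \<noteq> fst ((m # m' # ms) ! Suc i)"
      using H by (cases i) auto
  qed
qed

lemma nc_eq: "no_consecutive_same_disk ms = nc ms"
proof (induction ms rule: nc.induct)
  case 1 then show ?case by (simp add: no_consecutive_same_disk_def)
next
  case (2 m) then show ?case by (simp add: no_consecutive_same_disk_def)
next
  case (3 m m' ms) then show ?case by (simp add: ncs_cons2)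
qed

lemma nc_Cons: "nc (m # ys) \<longleftrightarrow> nc ys \<and> (ys \<noteq> [] \<longrightarrow> fst m \<noteq> fst (hd ys))"
  by (cases ys) auto

lemma nc_append: "nc (xs @ ys) \<longleftrightarrow> nc xs \<and> nc ys \<and> (xs \<noteq> [] \<longrightarrow> ys \<noteq> [] \<longrightarrow> fst (last xs) \<noteq> fst (hd ys))"
  by (induction xs) (auto simp: nc_Cons)

lemma legal_seq_append: "legal_seq s (xs @ ys) \<longleftrightarrow> legal_seq s xs \<and> legal_seq (apply_seq s xs) ys"
  by (induction xs arbitrary: s) (auto simp: apply_seq_def)

lemma apply_seq_append: "apply_seq s (xs @ ys) = apply_seq (apply_seq s xs) ys"
  by (simp add: apply_seq_def)

lemma apply_seq_Nil[simp]: "apply_seq s [] = s" by (simp add: apply_seq_def)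
lemma apply_seq_Cons[simp]: "apply_seq s (m # ms) = apply_seq (do_move s m) ms" by (simp add: apply_seq_def)

lemma legal_move_append:
  assumes "d < length xs"
  shows "legal_move (xs @ ys) d q \<longleftrightarrow> legal_move xs d q"
  using assms unfolding legal_move_def by (auto simp: nth_append)

lemma lift:
  "legal_seq xs ms \<Longrightarrow> legal_seq (xs @ ys) ms \<and> apply_seq (xs @ ys) ms = apply_seq xs ms @ ys"
proof (induction ms arbitrary: xs)
  case Nil then show ?case by simp
next
  case (Cons m ms)
  have d: "fst m < length xs" using Cons.prems by (simp add: legal_move_def)
  have e: "do_move (xs @ ys) m = do_move xs m @ ys"
    using d by (simp add: do_move_def list_update_append)
  show ?case using Cons d e by (simp add: legal_move_append)
qed

fun H :: "nat \<Rightarrow> nat \<Rightarrow> nat \<Rightarrow> (nat \<times> nat) list" where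
  "H 0 a b = []"
| "H (Suc k) a b = H k a (6 - a - b) @ [(k, b)] @ H k (6 - a - b) b"

lemma H_props:
  assumes "a \<in> {1,2,3}" "b \<in> {1,2,3}" "a \<noteq> b"
  shows "legal_seq (replicate k a) (H k a b) \<and> apply_seq (replicate k a) (H k a b) = replicate k b
    \<and> length (H k a b) = 2 ^ k - 1 \<and> nc (H k a b)
    \<and> (k > 0 \<longrightarrow> H k a b \<noteq> [] \<and> fst (hd (H k a b)) = 0 \<and> fst (last (H k a b)) = 0)"
  using assms
proof (induction k arbitrary: a b)
  case 0 then show ?case by simp
next
  case (Suc k)
  define c where "c = 6 - a - b"
  have c: "c \<in> {1,2,3}" "c \<noteq> a" "c \<noteq> b" using Suc.prems unfolding c_def by auto
  have I1: "legal_seq (replicate k a) (H k a c) \<and> apply_seq (replicate k a) (H k a c) = replicate k c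
    \<and> length (H k a c) = 2 ^ k - 1 \<and> nc (H k a c)
    \<and> (k > 0 \<longrightarrow> H k a c \<noteq> [] \<and> fst (hd (H k a c)) = 0 \<and> fst (last (H k a c)) = 0)"
    using Suc.IH[of a c] Suc.prems c by auto
  have I2: "legal_seq (replicate k c) (H k c b) \<and> apply_seq (replicate k c) (H k c b) = replicate k b
    \<and> length (H k c b) = 2 ^ k - 1 \<and> nc (H k c b)
    \<and> (k > 0 \<longrightarrow> H k c b \<noteq> [] \<and> fst (hd (H k c b)) = 0 \<and> fst (last (H k c b)) = 0)"
    using Suc.IH[of c b] Suc.prems c by auto
  have rs: "\<And>x. replicate (Suc k) x = replicate k x @ [x]" by (simp add: replicate_append_same)
  have L1: "legal_seq (replicate k a @ [a]) (H k a c) \<and> apply_seq (replicate k a @ [a]) (H k a c) = replicate k c @ [a]"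
    using lift[of "replicate k a" "H k a c" "[a]"] I1 by simp
  have L2: "legal_seq (replicate k c @ [b]) (H k c b) \<and> apply_seq (replicate k c @ [b]) (H k c b) = replicate k b @ [b]"
    using lift[of "replicate k c" "H k c b" "[b]"] I2 by simp
  have mv: "legal_move (replicate k c @ [a]) k b"
    using Suc.prems c by (auto simp: legal_move_def nth_append)
  have dm: "do_move (replicate k c @ [a]) (k, b) = replicate k c @ [b]"
    by (simp add: do_move_def list_update_append)
  have Hs: "H (Suc k) a b = H k a c @ [(k, b)] @ H k c b" by (simp add: c_def)
  have len: "length (H (Suc k) a b) = 2 ^ Suc k - 1"
  proof -
    have "(1::nat) \<le> 2 ^ k" by simp
    then show ?thesis using I1 I2 Hs by simp
  qed
  have ncc: "nc (H (Suc k) a b)"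
    using I1 I2 unfolding Hs by (cases "k = 0") (auto simp: nc_append nc_Cons)
  have hl: "H (Suc k) a b \<noteq> [] \<and> fst (hd (H (Suc k) a b)) = 0 \<and> fst (last (H (Suc k) a b)) = 0"
    using I1 I2 unfolding Hs by (cases "k = 0") auto
  show ?case unfolding rs
    using L1 L2 mv dm len ncc hl unfolding Hs
    by (simp add: legal_seq_append apply_seq_append)
qed

definition goodT :: "nat list \<Rightarrow> (nat \<times> nat) list \<Rightarrow> nat list \<Rightarrow> bool" where
  "goodT s ms t \<longleftrightarrow> odd (length ms) \<and> legal_seq s ms \<and> nc ms \<and> apply_seq s ms = t \<and> fst (hd ms) = 0"

lemma b_1_1_1: "\<exists>ms. goodT [1,1] ms [1,1]"
  by (rule exI[of _ "[(0,2),(1,3),(0,1),(1,2),(0,3),(1,1),(0,1)]"]) (simp add: goodT_def legal_move_def do_move_def apply_seq_def)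

lemma b_1_1_2: "\<exists>ms. goodT [1,1] ms [1,2]"
  by (rule exI[of _ "[(0,3),(1,2),(0,1)]"]) (simp add: goodT_def legal_move_def do_move_def apply_seq_def)

lemma b_1_1_3: "\<exists>ms. goodT [1,1] ms [1,3]"
  by (rule exI[of _ "[(0,2),(1,3),(0,1)]"]) (simp add: goodT_def legal_move_def do_move_def apply_seq_def)

lemma b_1_2_1: "\<exists>ms. goodT [1,1] ms [2,1]"
  by (rule exI[of _ "[(0,2)]"]) (simp add: goodT_def legal_move_def do_move_def apply_seq_def)

lemma b_1_2_2: "\<exists>ms. goodT [1,1] ms [2,2]"
  by (rule exI[of _ "[(0,3),(1,2),(0,2)]"]) (simp add: goodT_def legal_move_def do_move_def apply_seq_def)

lemma b_1_2_3: "\<exists>ms. goodT [1,1] ms [2,3]"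
  by (rule exI[of _ "[(0,3),(1,2),(0,1),(1,3),(0,2)]"]) (simp add: goodT_def legal_move_def do_move_def apply_seq_def)

lemma b_1_3_1: "\<exists>ms. goodT [1,1] ms [3,1]"
  by (rule exI[of _ "[(0,3)]"]) (simp add: goodT_def legal_move_def do_move_def apply_seq_def)

lemma b_1_3_2: "\<exists>ms. goodT [1,1] ms [3,2]"
  by (rule exI[of _ "[(0,2),(1,3),(0,1),(1,2),(0,3)]"]) (simp add: goodT_def legal_move_def do_move_def apply_seq_def)

lemma b_1_3_3: "\<exists>ms. goodT [1,1] ms [3,3]"
  by (rule exI[of _ "[(0,2),(1,3),(0,3)]"]) (simp add: goodT_def legal_move_def do_move_def apply_seq_def)

lemma b_2_1_1: "\<exists>ms. goodT [2,2] ms [1,1]"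
  by (rule exI[of _ "[(0,3),(1,1),(0,1)]"]) (simp add: goodT_def legal_move_def do_move_def apply_seq_def)

lemma b_2_1_2: "\<exists>ms. goodT [2,2] ms [1,2]"
  by (rule exI[of _ "[(0,1)]"]) (simp add: goodT_def legal_move_def do_move_def apply_seq_def)

lemma b_2_1_3: "\<exists>ms. goodT [2,2] ms [1,3]"
  by (rule exI[of _ "[(0,3),(1,1),(0,2),(1,3),(0,1)]"]) (simp add: goodT_def legal_move_def do_move_def apply_seq_def)

lemma b_2_2_1: "\<exists>ms. goodT [2,2] ms [2,1]"
  by (rule exI[of _ "[(0,3),(1,1),(0,2)]"]) (simp add: goodT_def legal_move_def do_move_def apply_seq_def)

lemma b_2_2_2: "\<exists>ms. goodT [2,2] ms [2,2]"
  by (rule exI[of _ "[(0,1),(1,3),(0,2),(1,1),(0,3),(1,2),(0,2)]"]) (simp add: goodT_def legal_move_def do_move_def apply_seq_def)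

lemma b_2_2_3: "\<exists>ms. goodT [2,2] ms [2,3]"
  by (rule exI[of _ "[(0,1),(1,3),(0,2)]"]) (simp add: goodT_def legal_move_def do_move_def apply_seq_def)

lemma b_2_3_1: "\<exists>ms. goodT [2,2] ms [3,1]"
  by (rule exI[of _ "[(0,1),(1,3),(0,2),(1,1),(0,3)]"]) (simp add: goodT_def legal_move_def do_move_def apply_seq_def)

lemma b_2_3_2: "\<exists>ms. goodT [2,2] ms [3,2]"
  by (rule exI[of _ "[(0,3)]"]) (simp add: goodT_def legal_move_def do_move_def apply_seq_def)

lemma b_2_3_3: "\<exists>ms. goodT [2,2] ms [3,3]"
  by (rule exI[of _ "[(0,1),(1,3),(0,3)]"]) (simp add: goodT_def legal_move_def do_move_def apply_seq_def)

lemma b_3_1_1: "\<exists>ms. goodT [3,3] ms [1,1]"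
  by (rule exI[of _ "[(0,2),(1,1),(0,1)]"]) (simp add: goodT_def legal_move_def do_move_def apply_seq_def)

lemma b_3_1_2: "\<exists>ms. goodT [3,3] ms [1,2]"
  by (rule exI[of _ "[(0,2),(1,1),(0,3),(1,2),(0,1)]"]) (simp add: goodT_def legal_move_def do_move_def apply_seq_def)

lemma b_3_1_3: "\<exists>ms. goodT [3,3] ms [1,3]"
  by (rule exI[of _ "[(0,1)]"]) (simp add: goodT_def legal_move_def do_move_def apply_seq_def)

lemma b_3_2_1: "\<exists>ms. goodT [3,3] ms [2,1]"
  by (rule exI[of _ "[(0,1),(1,2),(0,3),(1,1),(0,2)]"]) (simp add: goodT_def legal_move_def do_move_def apply_seq_def)

lemma b_3_2_2: "\<exists>ms. goodT [3,3] ms [2,2]"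
  by (rule exI[of _ "[(0,1),(1,2),(0,2)]"]) (simp add: goodT_def legal_move_def do_move_def apply_seq_def)

lemma b_3_2_3: "\<exists>ms. goodT [3,3] ms [2,3]"
  by (rule exI[of _ "[(0,2)]"]) (simp add: goodT_def legal_move_def do_move_def apply_seq_def)

lemma b_3_3_1: "\<exists>ms. goodT [3,3] ms [3,1]"
  by (rule exI[of _ "[(0,2),(1,1),(0,3)]"]) (simp add: goodT_def legal_move_def do_move_def apply_seq_def)

lemma b_3_3_2: "\<exists>ms. goodT [3,3] ms [3,2]"
  by (rule exI[of _ "[(0,1),(1,2),(0,3)]"]) (simp add: goodT_def legal_move_def do_move_def apply_seq_def)

lemma b_3_3_3: "\<exists>ms. goodT [3,3] ms [3,3]"
  by (rule exI[of _ "[(0,1),(1,2),(0,3),(1,1),(0,2),(1,3),(0,3)]"]) (simp add: goodT_def legal_move_def do_move_def apply_seq_def)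

lemma base2:
  assumes "c \<in> {1,2,3}" "hanoi_pos 2 P"
  shows "\<exists>ms. goodT (replicate 2 c) ms P"
proof -
  obtain x y where P: "P = [x, y]" using assms(2)
    by (auto simp: hanoi_pos_def length_Suc_conv numeral_2_eq_2)
  have xy: "x \<in> {1,2,3}" "y \<in> {1,2,3}" using assms(2) P by (auto simp: hanoi_pos_def)
  have r: "replicate 2 c = [c, c]" by (simp add: numeral_2_eq_2)
  show ?thesis unfolding r P using assms(1) xy
    b_1_1_1 b_1_1_2 b_1_1_3 b_1_2_1 b_1_2_2 b_1_2_3 b_1_3_1 b_1_3_2 b_1_3_3 b_2_1_1 b_2_1_2 b_2_1_3 b_2_2_1 b_2_2_2 b_2_2_3 b_2_3_1 b_2_3_2 b_2_3_3 b_3_1_1 b_3_1_2 b_3_1_3 b_3_2_1 b_3_2_2 b_3_2_3 b_3_3_1 b_3_3_2 b_3_3_3 by auto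
qed

lemma T:
  assumes "2 \<le> m"
  shows "c \<in> {1,2,3} \<Longrightarrow> hanoi_pos m P \<Longrightarrow> \<exists>ms. goodT (replicate m c) ms P"
  using assms
proof (induction m arbitrary: c P rule: nat_induct_at_least)
  case base
  then show ?case using base2 by blast
next
  case (Suc m)
  obtain P' b where P: "P = P' @ [b]" and lP': "length P' = m"
    using Suc.prems(2) unfolding hanoi_pos_def by (metis length_Suc_conv_rev)
  have hP': "hanoi_pos m P'" and b: "b \<in> {1,2,3}"
    using Suc.prems(2) P lP' by (auto simp: hanoi_pos_def)
  have rs: "replicate (Suc m) c = replicate m c @ [c]" by (simp add: replicate_append_same)
  show ?case
  proof (cases "b = c")
    case True
    obtain ms where g: "goodT (replicate m c) ms P'" using Suc.IH[OF Suc.prems(1) hP'] by blast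
    have "legal_seq (replicate m c @ [c]) ms \<and> apply_seq (replicate m c @ [c]) ms = P' @ [c]"
      using lift[of "replicate m c" ms "[c]"] g by (simp add: goodT_def)
    then have "goodT (replicate (Suc m) c) ms P" using g True unfolding rs P by (simp add: goodT_def)
    then show ?thesis by blast
  next
    case False
    define e where "e = 6 - b - c"
    have e: "e \<in> {1,2,3}" "e \<noteq> b" "e \<noteq> c" using False b Suc.prems(1) unfolding e_def by auto
    have Hp: "legal_seq (replicate m c) (H m c e) \<and> apply_seq (replicate m c) (H m c e) = replicate m e
      \<and> length (H m c e) = 2 ^ m - 1 \<and> nc (H m c e)
      \<and> (m > 0 \<longrightarrow> H m c e \<noteq> [] \<and> fst (hd (H m c e)) = 0 \<and> fst (last (H m c e)) = 0)"
      using H_props[of c e m] e Suc.prems(1) by auto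
    obtain ms where g: "goodT (replicate m e) ms P'" using Suc.IH[OF e(1) hP'] by blast
    have L1: "legal_seq (replicate m c @ [c]) (H m c e) \<and> apply_seq (replicate m c @ [c]) (H m c e) = replicate m e @ [c]"
      using lift[of "replicate m c" "H m c e" "[c]"] Hp by simp
    have L2: "legal_seq (replicate m e @ [b]) ms \<and> apply_seq (replicate m e @ [b]) ms = P' @ [b]"
      using lift[of "replicate m e" ms "[b]"] g by (simp add: goodT_def)
    have mv: "legal_move (replicate m e @ [c]) m b"
      using b False e by (auto simp: legal_move_def nth_append)
    have dm: "do_move (replicate m e @ [c]) (m, b) = replicate m e @ [b]"
      by (simp add: do_move_def list_update_append)
    have m0: "m > 0" using Suc.hyps by simp
    have ev: "even (2 ^ m :: nat)" using m0 by simp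
    have "(1::nat) \<le> 2 ^ m" by simp
    then have od: "odd (length (H m c e) + 1 + length ms)"
      using Hp g ev by (auto simp: goodT_def)
    have ms0: "ms \<noteq> []" using g by (auto simp: goodT_def)
    have ncc: "nc (H m c e @ [(m, b)] @ ms)"
      using Hp g m0 ms0 Suc.hyps by (auto simp: nc_append nc_Cons goodT_def)
    have "goodT (replicate (Suc m) c) (H m c e @ [(m, b)] @ ms) P"
      unfolding goodT_def rs P
      using L1 L2 mv dm od ncc Hp m0 by (simp add: legal_seq_append apply_seq_append)
    then show ?thesis by blast
  qed
qed

theorem theorem1:
  fixes n :: nat and P :: "nat list"
  assumes "n \<ge> 2" and "hanoi_pos n P"
  shows "\<exists>ms. odd (length ms) \<and> legal_seq (initial_pos n) ms
            \<and> no_consecutive_same_disk ms \<and> apply_seq (initial_pos n) ms = P"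
proof -
  obtain ms where "goodT (replicate n 1) ms P" using T[OF assms(1), of 1 P] assms(2) by auto
  then show ?thesis unfolding initial_pos_def goodT_def nc_eq by blast
qed

end
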